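(* For each $\mathbf{s} \in \mathcal{S}$, $\bar{\mathbf{p}}^{\epsilon}(\mathbf{s})$ is continuous in $\epsilon > 0$.
   Context: There are $N$ systems $\mathcal{A} = \{1,\ldots,N\}$. $B = [b_{i,j}]$ is a nonnegative $N\times N$ matrix with $b_{i,j} = \beta_{j,i} \ge 0$ (infection rate from system $j$ to system $i$), $\beta_{i,i}=0$; the directed graph with an edge $(i,j)$ iff $\beta_{i,j}>0$ is weakly connected (not necessarily strongly connected). $\boldsymbol{\lambda} \in \mathbb{R}_+^N$ is the vector of external attack rates (some entries may be zero), $\boldsymbol{\delta} > \mathbf{0}$ the recovery rates, and $\mathbf{q}(\mathbf{s}) = (q_i(s_i))_i$ the breach probabilities, where each $q_i:\mathbb{R}_+\to(0,1]$ is decreasing, strictly convex and continuously differentiable; $\mathcal{S} \subset \mathbb{R}_+^N$ is a convex feasible set of security investments. For $\epsilon > 0$, let $\boldsymbol{\lambda}^{\epsilon} := \boldsymbol{\lambda} + \epsilon \mathbf{1}$, and for fixed $\mathbf{s}$ let $\bar{\mathbf{p}}^{\epsilon}(\mathbf{s}) > \mathbf{0}$ denote the unique (strictly positive) solution $\mathbf{p}$ of $(\mathbf{1} - \mathbf{p}) \circ (\boldsymbol{\lambda}^{\epsilon} + B \mathbf{p}) - \mathbf{q}(\mathbf{s})^{-1} \circ \boldsymbol{\delta} \circ \mathbf{p} = \mathbf{0}$, where $\circ$ and $\mathbf{q}(\mathbf{s})^{-1}$ are elementwise product and inverse. *)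

theory Defs
  imports "HOL-Analysis.Analysis"
begin

definition strictly_convex_on :: "real set \<Rightarrow> (real \<Rightarrow> real) \<Rightarrow> bool" where
  "strictly_convex_on A f \<longleftrightarrow>
     (\<forall>x\<in>A. \<forall>y\<in>A. \<forall>t. x \<noteq> y \<and> 0 < t \<and> t < 1 \<longrightarrow>
        f ((1 - t) * x + t * y) < (1 - t) * f x + t * f y)"

text \<open>Infection graph: edge (i,j) iff beta_{i,j} > 0, where B \$ i \$ j = beta_{j,i};
  so edge (i,j) iff B \$ j \$ i > 0. Weak connectivity: the underlying undirected
  graph is connected.\<close>
definition weakly_connected :: "real^'n^'n \<Rightarrow> bool" where
  "weakly_connected B \<longleftrightarrow>
     (\<forall>i j. (i, j) \<in> ({(a, b). B $ b $ a > 0 \<or> B $ a $ b > 0})\<^sup>*)"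

definition equil_eq :: "real^'n^'n \<Rightarrow> real^'n \<Rightarrow> real^'n \<Rightarrow> ('n \<Rightarrow> real \<Rightarrow> real)
    \<Rightarrow> real \<Rightarrow> real^'n \<Rightarrow> real^'n \<Rightarrow> bool" where
  "equil_eq B lam delta q eps s p \<longleftrightarrow>
     (\<forall>i. (1 - p $ i) * (lam $ i + eps + (B *v p) $ i) - delta $ i * p $ i / q i (s $ i) = 0)"

definition pbar :: "real^'n^'n \<Rightarrow> real^'n \<Rightarrow> real^'n \<Rightarrow> ('n \<Rightarrow> real \<Rightarrow> real)
    \<Rightarrow> real \<Rightarrow> real^'n \<Rightarrow> real^'n" where
  "pbar B lam delta q eps s = (THE p. (\<forall>i. p $ i > 0) \<and> equil_eq B lam delta q eps s p)"

end

theory Submission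
  imports Defs
begin


definition hh :: "real \<Rightarrow> real \<Rightarrow> real" where "hh c x = x / (x + c)"

lemma hh_mono: "0 < c \<Longrightarrow> 0 \<le> x \<Longrightarrow> x \<le> y \<Longrightarrow> hh c x \<le> hh c y"
proof -
  assume a: "0 < c" "0 \<le> x" "x \<le> y"
  have "x * c \<le> y * c" using a by (simp add: mult_right_mono)
  then show ?thesis using a unfolding hh_def by (simp add: divide_simps algebra_simps)
qed

lemma hh_sub: "0 < c \<Longrightarrow> 0 < y \<Longrightarrow> 0 < t \<Longrightarrow> t < 1 \<Longrightarrow> t * hh c y < hh c (t * y)"
  unfolding hh_def by (simp add: divide_simps) (smt (verit) mult_strict_left_mono mult_pos_pos)

lemma hh_pos: "0 < c \<Longrightarrow> 0 < x \<Longrightarrow> 0 < hh c x"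
  unfolding hh_def by simp

lemma hh_le1: "0 < c \<Longrightarrow> 0 \<le> x \<Longrightarrow> hh c x \<le> 1"
  unfolding hh_def by simp

lemma Bmono:
  fixes B :: "real^'n^'n"
  assumes "\<forall>i j. B $ i $ j \<ge> 0" "\<forall>i. r $ i \<ge> t * u $ i"
  shows "(B *v r) $ k \<ge> t * (B *v u) $ k"
proof -
  have "t * (B *v u) $ k = (\<Sum>j\<in>UNIV. B $ k $ j * (t * u $ j))"
    by (simp add: matrix_vector_mult_def sum_distrib_left algebra_simps)
  also have "\<dots> \<le> (\<Sum>j\<in>UNIV. B $ k $ j * r $ j)"
    by (rule sum_mono) (simp add: assms mult_left_mono)
  finally show ?thesis by (simp add: matrix_vector_mult_def)
qed

lemma Bnonneg:
  fixes B :: "real^'n^'n"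
  assumes "\<forall>i j. B $ i $ j \<ge> 0" "\<forall>i. r $ i \<ge> 0"
  shows "(B *v r) $ k \<ge> 0"
  using Bmono[OF assms(1), of 0 r r k] assms by simp

definition isfp :: "real^'n^'n \<Rightarrow> real^'n \<Rightarrow> ('n \<Rightarrow> real) \<Rightarrow> real \<Rightarrow> real^'n \<Rightarrow> bool" where
  "isfp B a c e r \<longleftrightarrow> (\<forall>i. r $ i = hh (c i) (a $ i + e + (B *v r) $ i))"

lemma key:
  fixes B :: "real^'n^'n"
  assumes B: "\<forall>i j. B $ i $ j \<ge> 0" and a: "\<forall>i. a $ i \<ge> 0" and c: "\<forall>i. c i > 0"
    and e: "e1 > 0" "e2 > 0" and rp: "\<forall>i. r $ i > 0" and up: "\<forall>i. u $ i > 0"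
    and fr: "isfp B a c e1 r" and fu: "isfp B a c e2 u"
  shows "r $ i \<ge> min 1 (e1 / e2) * u $ i"
proof (rule ccontr)
  assume neg: "\<not> ?thesis"
  define \<tau> where "\<tau> = Min (range (\<lambda>j. r $ j / u $ j))"
  have fin: "finite (range (\<lambda>j. r $ j / u $ j))" by simp
  have "\<tau> \<in> range (\<lambda>j. r $ j / u $ j)" unfolding \<tau>_def by (rule Min_in[OF fin]) simp
  then obtain k where k: "\<tau> = r $ k / u $ k" by blast
  have le: "\<tau> \<le> r $ j / u $ j" for j unfolding \<tau>_def using fin by simp
  have ge: "r $ j \<ge> \<tau> * u $ j" for j using le[of j] up by (simp add: divide_simps)
  have tpos: "\<tau> > 0" using k rp up by simp
  have "r $ i / u $ i < min 1 (e1 / e2)" using neg up[rule_format, of i] pos_divide_less_eq[of "u $ i" "r $ i" "min 1 (e1 / e2)"] by linarith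
  then have tm: "\<tau> < min 1 (e1 / e2)" using le[of i] by linarith
  then have t1: "\<tau> < 1" and te: "\<tau> * e2 < e1" using e by (auto simp: divide_simps)
  have Br: "(B *v r) $ k \<ge> \<tau> * (B *v u) $ k" using Bmono[OF B] ge by blast
  define Y where "Y = a $ k + e2 + (B *v u) $ k"
  have Ypos: "Y > 0" unfolding Y_def using Bnonneg[OF B, of u k] up a e by (smt (verit))
  have "\<tau> * Y \<le> a $ k + e1 + (B *v r) $ k"
    unfolding Y_def using Br te t1 tpos a[rule_format, of k]
    by (smt (verit) distrib_left mult_left_le_one_le)
  then have "hh (c k) (\<tau> * Y) \<le> r $ k"
    using fr hh_mono[of "c k" "\<tau> * Y"] c tpos Ypos unfolding isfp_def by (metis less_imp_le mult_pos_pos)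
  moreover have "\<tau> * u $ k < hh (c k) (\<tau> * Y)"
    using fu hh_sub[of "c k" Y \<tau>] c tpos t1 Ypos unfolding isfp_def Y_def by metis
  moreover have "\<tau> * u $ k = r $ k" using k up[rule_format, of k] by simp
  ultimately show False by linarith
qed



lemma absdiff:
  fixes x y a b :: real
  assumes "0 < a" "0 < b" "0 < x" "x \<le> 1" "0 < y" "y \<le> 1"
   "x \<ge> min 1 (a / b) * y" "y \<ge> min 1 (b / a) * x"
  shows "\<bar>x - y\<bar> \<le> \<bar>a - b\<bar> / min a b"
proof (cases "a \<le> b")
  case True
  then have "min 1 (b/a) = 1" "min 1 (a/b) = a / b" using assms by (auto simp: divide_simps)
  then have h: "y \<ge> x" "x \<ge> (a/b) * y" using assms by auto
  have "y - x \<le> y - (a/b)*y" using h by simp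
  also have "\<dots> = (b - a)/b * y" using assms by (simp add: divide_simps algebra_simps)
  also have "\<dots> \<le> (b - a)/b" by (rule mult_left_le) (use assms True in auto)
  also have "\<dots> \<le> (b - a)/a" using assms True by (simp add: frac_le)
  finally show ?thesis using h True by simp
next
  case False
  then have "min 1 (a/b) = 1" "min 1 (b/a) = b / a" using assms by (auto simp: divide_simps)
  then have h: "x \<ge> y" "y \<ge> (b/a) * x" using assms by auto
  have "x - y \<le> x - (b/a)*x" using h by simp
  also have "\<dots> = (a - b)/a * x" using assms by (simp add: divide_simps algebra_simps)
  also have "\<dots> \<le> (a - b)/a" by (rule mult_left_le) (use assms False in auto)
  also have "\<dots> \<le> (a - b)/b" using assms False by (simp add: frac_le)
  finally show ?thesis using h False by simp
qed



lemma sol_fp: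
  fixes B :: "real^'n^'n"
  assumes B: "\<forall>i j. B $ i $ j \<ge> 0" and a: "\<forall>i. lam $ i \<ge> 0" and e: "e > 0"
    and dq: "\<forall>i. delta $ i > 0 \<and> Q i > 0"
    and pp: "\<forall>i. p $ i > 0"
    and eq: "\<forall>i. (1 - p $ i) * (lam $ i + e + (B *v p) $ i) - delta $ i * p $ i / Q i = 0"
  shows "isfp B lam (\<lambda>i. delta $ i / Q i) e p"
  unfolding isfp_def hh_def
proof
  fix i
  define g where "g = lam $ i + e + (B *v p) $ i"
  have gp: "g > 0" unfolding g_def using Bnonneg[OF B, of p i] pp a e by (smt (verit))
  define C where "C = delta $ i / Q i"
  have c: "C > 0" using dq unfolding C_def by simp
  have "(1 - p $ i) * g = C * p $ i" using eq[rule_format, of i] unfolding g_def C_def by simp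
  then have "g = p $ i * (g + C)" by (simp add: algebra_simps)
  then have "p $ i = g / (g + C)" using gp c by (simp add: divide_simps)
  then show "p $ i = g / (g + delta $ i / Q i)" unfolding C_def .
qed

lemma fp_sol:
  fixes B :: "real^'n^'n"
  assumes B: "\<forall>i j. B $ i $ j \<ge> 0" and a: "\<forall>i. lam $ i \<ge> 0" and e: "e > 0"
    and dq: "\<forall>i. delta $ i > 0 \<and> Q i > 0"
    and pp: "\<forall>i. p $ i \<ge> 0"
    and fp: "isfp B lam (\<lambda>i. delta $ i / Q i) e p"
  shows "(\<forall>i. p $ i > 0) \<and> (\<forall>i. (1 - p $ i) * (lam $ i + e + (B *v p) $ i) - delta $ i * p $ i / Q i = 0)"
proof (intro conjI allI)
  fix i
  define g where "g = lam $ i + e + (B *v p) $ i"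
  have gp: "g > 0" unfolding g_def using Bnonneg[OF B, of p i] pp a e by (smt (verit))
  define C where "C = delta $ i / Q i"
  have c: "C > 0" using dq unfolding C_def by simp
  have pe: "p $ i = g / (g + C)" using fp unfolding isfp_def hh_def g_def C_def by simp
  show "p $ i > 0" using pe gp c by simp
  have "g = p $ i * (g + C)" using pe gp c by (simp add: divide_simps)
  then have "(1 - p $ i) * g = C * p $ i" by (simp add: algebra_simps)
  then have "(1 - p $ i) * g = delta $ i / Q i * p $ i" unfolding C_def .
  then show "(1 - p $ i) * (lam $ i + e + (B *v p) $ i) - delta $ i * p $ i / Q i = 0"
    unfolding g_def by simp
qed

lemma fp_exists:
  fixes B :: "real^'n^'n"
  assumes B: "\<forall>i j. B $ i $ j \<ge> 0" and a: "\<forall>i. lam $ i \<ge> 0" and e: "e > 0"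
    and c: "\<forall>i. c i > 0"
  shows "\<exists>p. (\<forall>i. p $ i \<ge> 0) \<and> isfp B lam c e p"
proof -
  define f where "f p = (\<chi> i. hh (c i) (lam $ i + e + (B *v p) $ i))" for p :: "real^'n"
  have pos: "lam $ i + e + (B *v p) $ i > 0" if "p \<in> cbox 0 1" for p i
    using that Bnonneg[OF B, of p i] a e by (simp add: mem_box_cart) (smt (verit))
  have cont: "continuous_on (cbox 0 1) f"
    unfolding f_def hh_def
    apply (intro continuous_intros)
    using pos c by (smt (verit))
  have into: "f \<in> cbox 0 1 \<rightarrow> cbox 0 1"
  proof
    fix p :: "real^'n" assume p: "p \<in> cbox 0 1"
    show "f p \<in> cbox 0 1" unfolding mem_box_cart f_def
      using pos[OF p] c hh_pos hh_le1 by (simp add: less_imp_le)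
  qed
  have nonempty: "cbox (0::real^'n) 1 \<noteq> {}"
  proof -
    have "(0::real^'n) \<in> cbox 0 1" by (simp add: mem_box_cart)
    then show ?thesis by blast
  qed
  obtain p where "p \<in> cbox 0 1" "f p = p"
    using brouwer[OF compact_cbox convex_box(1) _ cont into] nonempty by blast
  then show ?thesis unfolding isfp_def f_def
    by (auto simp: mem_box_cart vec_eq_iff)
qed



theorem proposition2:
  fixes B :: "real^'n^'n" and lam delta :: "real^'n"
    and q :: "'n \<Rightarrow> real \<Rightarrow> real" and S :: "(real^'n) set" and s :: "real^'n"
  assumes B_nonneg: "\<forall>i j. B $ i $ j \<ge> 0"
    and B_diag: "\<forall>i. B $ i $ i = 0"
    and B_conn: "weakly_connected B"
    and lam_nonneg: "\<forall>i. lam $ i \<ge> 0"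
    and delta_pos: "\<forall>i. delta $ i > 0"
    and q_range: "\<forall>i. \<forall>x\<ge>0. 0 < q i x \<and> q i x \<le> 1"
    and q_decr: "\<forall>i. antimono_on {0..} (q i)"
    and q_sconv: "\<forall>i. strictly_convex_on {0..} (q i)"
    and q_C1: "\<forall>i. \<exists>q'. continuous_on {0..} q' \<and>
                  (\<forall>x\<ge>0. (q i has_real_derivative q' x) (at x within {0..}))"
    and S_convex: "convex S"
    and S_nonneg: "S \<subseteq> {x. \<forall>i. x $ i \<ge> 0}"
    and s_in: "s \<in> S"
  shows "continuous_on {0<..} (\<lambda>eps. pbar B lam delta q eps s)"
proof -
  define Q where "Q i = q i (s $ i)" for i
  define c where "c i = delta $ i / Q i" for i
  have dq: "\<forall>i. delta $ i > 0 \<and> Q i > 0"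
  proof
    fix i
    have "s $ i \<ge> 0" using S_nonneg s_in by auto
    then have "Q i > 0" unfolding Q_def using q_range by simp
    then show "delta $ i > 0 \<and> Q i > 0" using delta_pos by simp
  qed
  have cpos: "\<forall>i. c i > 0" using dq unfolding c_def by simp
  define P where "P e = pbar B lam delta q e s" for e
  have Pprop: "(\<forall>i. P e $ i > 0) \<and> isfp B lam c e (P e)" if e: "e > 0" for e
  proof -
    obtain p where p: "\<forall>i. p $ i \<ge> 0" "isfp B lam c e p"
      using fp_exists[OF B_nonneg lam_nonneg e cpos] by blast
    have ps: "(\<forall>i. p $ i > 0) \<and> equil_eq B lam delta q e s p"
      using fp_sol[OF B_nonneg lam_nonneg e dq p(1)] p(2) unfolding c_def equil_eq_def Q_def
      by blast
    have uniq: "r = p" if r: "(\<forall>i. r $ i > 0) \<and> equil_eq B lam delta q e s r" for r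
    proof -
      have fr: "isfp B lam c e r"
        using sol_fp[OF B_nonneg lam_nonneg e dq, of r] r unfolding c_def equil_eq_def Q_def
        by blast
      have rp: "\<forall>i. r $ i > 0" using r by blast
      have pp: "\<forall>i. p $ i > 0" using ps by blast
      have m1: "min 1 (e / e) = (1::real)" using e by simp
      have "r $ i \<ge> p $ i" for i
        using key[OF B_nonneg lam_nonneg cpos e e rp pp fr p(2), of i] unfolding m1 by simp
      moreover have "p $ i \<ge> r $ i" for i
        using key[OF B_nonneg lam_nonneg cpos e e pp rp p(2) fr, of i] unfolding m1 by simp
      ultimately show ?thesis by (simp add: vec_eq_iff order_antisym)
    qed
    have "P e = p" unfolding P_def pbar_def
    proof (rule the_equality)
      show "(\<forall>i. p $ i > 0) \<and> equil_eq B lam delta q e s p" by (rule ps)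
      show "r = p" if "(\<forall>i. r $ i > 0) \<and> equil_eq B lam delta q e s r" for r
        by (rule uniq[OF that])
    qed
    then show ?thesis using ps p(2) by simp
  qed
  have Ple1: "P e $ i \<le> 1" if "e > 0" for e i
  proof -
    have "P e $ i = hh (c i) (lam $ i + e + (B *v P e) $ i)"
      using Pprop[OF that] unfolding isfp_def by blast
    moreover have "lam $ i + e + (B *v P e) $ i \<ge> 0"
    proof -
      have "\<forall>j. P e $ j \<ge> 0" using Pprop[OF that] less_imp_le by blast
      then have "(B *v P e) $ i \<ge> 0" using Bnonneg[OF B_nonneg] by blast
      moreover have "lam $ i \<ge> 0" using lam_nonneg by blast
      ultimately show ?thesis using that by linarith
    qed
    ultimately show ?thesis using hh_le1 cpos by simp
  qed
  have bound: "\<bar>P e $ i - P e0 $ i\<bar> \<le> \<bar>e - e0\<bar> / min e e0" if "e > 0" "e0 > 0" for e e0 i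
  proof (rule absdiff)
    show "min 1 (e / e0) * P e0 $ i \<le> P e $ i"
      using key[OF B_nonneg lam_nonneg cpos that, of "P e" "P e0" i] Pprop that by blast
    show "min 1 (e0 / e) * P e $ i \<le> P e0 $ i"
      using key[OF B_nonneg lam_nonneg cpos that(2,1), of "P e0" "P e" i] Pprop that by blast
  qed (use that Pprop Ple1 in auto)
  show ?thesis
    unfolding P_def[symmetric] continuous_on_iff
  proof (intro ballI allI impI)
    fix e0 :: real and \<epsilon> :: real
    assume e0: "e0 \<in> {0<..}" and eps: "\<epsilon> > 0"
    define N where "N = real CARD('n)"
    define d where "d = min (e0 / 2) (\<epsilon> * e0 / (2 * (N + 1)))"
    have Npos: "N \<ge> 0" unfolding N_def by simp
    have dpos: "d > 0" using e0 eps Npos unfolding d_def by auto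
    have "dist (P e) (P e0) < \<epsilon>" if e: "e \<in> {0<..}" "dist e e0 < d" for e
    proof -
      have de: "\<bar>e - e0\<bar> < d" using e by (simp add: dist_real_def)
      have "\<bar>e - e0\<bar> < e0 / 2" using de unfolding d_def by simp
      then have "e > e0 / 2" by linarith
      then have me: "min e e0 \<ge> e0 / 2" using e0 by simp
      have each: "\<bar>(P e - P e0) $ i\<bar> \<le> 2 * \<bar>e - e0\<bar> / e0" for i
      proof -
        have "\<bar>(P e - P e0) $ i\<bar> \<le> \<bar>e - e0\<bar> / min e e0" using bound[of e e0 i] e e0 by simp
        also have "\<dots> \<le> \<bar>e - e0\<bar> / (e0 / 2)"
          by (rule divide_left_mono) (use me e0 in auto)
        finally show ?thesis by (simp add: mult.commute)
      qed
      have "dist (P e) (P e0) \<le> (\<Sum>i\<in>UNIV. \<bar>(P e - P e0) $ i\<bar>)"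
        unfolding dist_norm by (rule norm_le_l1_cart)
      also have "\<dots> \<le> N * (2 * \<bar>e - e0\<bar> / e0)"
        unfolding N_def by (rule sum_bounded_above) (use each in auto)
      also have "\<dots> \<le> N * (2 * d / e0)"
        using de e0 Npos by (intro mult_left_mono divide_right_mono) auto
      also have "\<dots> \<le> N * (\<epsilon> / (N + 1))"
      proof -
        have "d \<le> \<epsilon> * e0 / (2 * (N + 1))" unfolding d_def by simp
        then have "2 * d / e0 \<le> \<epsilon> / (N + 1)" using e0 Npos by (simp add: divide_simps algebra_simps)
        then show ?thesis by (rule mult_left_mono[OF _ Npos])
      qed
      also have "\<dots> < \<epsilon>" using Npos eps by (simp add: divide_simps)
      finally show ?thesis .
    qed
    then show "\<exists>d>0. \<forall>e\<in>{0<..}. dist e e0 < d \<longrightarrow> dist (P e) (P e0) < \<epsilon>"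
      using dpos by blast
  qed
qed

end
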